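(* Let $\mathcal{M}=(E,\rho)$ be a $q$-matroid and $V\le E$. (a) $\dim V-\rho(V)=\dim\mathrm{cyc}(V)-\rho(\mathrm{cyc}(V))$. (b) If $V=\mathrm{cyc}(V)\oplus W$, then $\rho(V)=\rho(\mathrm{cyc}(V))+\dim W$ and $\dim W=\rho(W)$, i.e. $W$ is independent.
   Context: Let $\mathbb{F}=\mathbb{F}_q$. A $q$-matroid is $\mathcal{M}=(E,\rho)$, $E$ a finite-dimensional $\mathbb{F}$-vector space, $\rho$ from subspaces to $\mathbb{Z}_{\ge0}$ with $0\le\rho(V)\le\dim V$, monotone and submodular. Independent: $\rho(V)=\dim V$. Cyclic core: $\mathrm{cyc}(V)=\{x\in V\mid\rho(W)=\rho(V)\text{ for all }W\le V\text{ with }W+\langle x\rangle=V\}$ (a subspace of $V$). *)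

theory Defs
  imports "HOL-Analysis.Analysis"
begin

text \<open>The ambient space E is modelled as the full space F^n = 'a^'n over a finite field 'a
  (every finite-dimensional F_q-space is isomorphic to one of these). Subspaces are
  vec.subspace, dimension is vec.dim, the sum of subspaces V+W is vec.span (V \<union> W).\<close>

definition q_matroid :: "((('a::{finite,field})^'n) set \<Rightarrow> nat) \<Rightarrow> bool" where
  "q_matroid \<rho> \<longleftrightarrow>
     (\<forall>V. vec.subspace V \<longrightarrow> \<rho> V \<le> vec.dim V) \<and>
     (\<forall>V W. vec.subspace V \<and> vec.subspace W \<and> V \<subseteq> W \<longrightarrow> \<rho> V \<le> \<rho> W) \<and>
     (\<forall>V W. vec.subspace V \<and> vec.subspace W \<longrightarrow>
        \<rho> (vec.span (V \<union> W)) + \<rho> (V \<inter> W) \<le> \<rho> V + \<rho> W)"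

definition q_independent :: "((('a::{finite,field})^'n) set \<Rightarrow> nat) \<Rightarrow> ('a^'n) set \<Rightarrow> bool" where
  "q_independent \<rho> V \<longleftrightarrow> \<rho> V = vec.dim V"

definition cyc :: "((('a::{finite,field})^'n) set \<Rightarrow> nat) \<Rightarrow> ('a^'n) set \<Rightarrow> ('a^'n) set" where
  "cyc \<rho> V = {x \<in> V. \<forall>W. vec.subspace W \<and> W \<subseteq> V \<and> vec.span (W \<union> vec.span {x}) = V
                          \<longrightarrow> \<rho> W = \<rho> V}"

end

theory Submission
  imports Defs
begin

lemma qm_le_dim: "q_matroid \<rho> \<Longrightarrow> vec.subspace V \<Longrightarrow> \<rho> V \<le> vec.dim V"
  unfolding q_matroid_def by blast

lemma qm_mono: "q_matroid \<rho> \<Longrightarrow> vec.subspace V \<Longrightarrow> vec.subspace W \<Longrightarrow> V \<subseteq> W \<Longrightarrow> \<rho> V \<le> \<rho> W"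
  unfolding q_matroid_def by blast

lemma qm_sub: "q_matroid \<rho> \<Longrightarrow> vec.subspace V \<Longrightarrow> vec.subspace W \<Longrightarrow>
   \<rho> (vec.span (V \<union> W)) + \<rho> (V \<inter> W) \<le> \<rho> V + \<rho> W"
  unfolding q_matroid_def by blast

lemma qm_zero: "q_matroid \<rho> \<Longrightarrow> \<rho> {0} = 0"
  using qm_le_dim[of \<rho> "{0}"] by (simp add: vec.subspace_0)

lemma dim_sum:
  assumes "vec.subspace S" "vec.subspace T"
  shows "vec.dim (vec.span (S \<union> T)) + vec.dim (S \<inter> T) = vec.dim S + vec.dim T"
proof -
  have "vec.span (S \<union> T) = {x + y |x y. x \<in> S \<and> y \<in> T}"
    using assms by (simp add: vec.span_Un del: vec.span_eq_iff) (simp add: vec.span_eq_iff[THEN iffD2])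
  then show ?thesis using vec.dim_sums_Int[OF assms] by simp
qed

lemma span_Un_span1: "vec.span (U \<union> vec.span {x}) = vec.span (insert x U)"
proof -
  have "vec.span (U \<union> vec.span {x}) = vec.span (U \<union> {x})"
    by (simp only: vec.span_Un vec.span_span)
  then show ?thesis by simp
qed

lemma step:
  assumes "q_matroid \<rho>" "vec.subspace U"
  shows "\<rho> (vec.span (insert x U)) \<le> \<rho> U + 1"
proof -
  have "\<rho> (vec.span (U \<union> vec.span {x})) + \<rho> (U \<inter> vec.span {x}) \<le> \<rho> U + \<rho> (vec.span {x})"
    using qm_sub[OF assms(1) assms(2), of "vec.span {x}"] by (simp add: vec.subspace_span)
  moreover have "\<rho> (vec.span {x}) \<le> 1"
    using qm_le_dim[OF assms(1), of "vec.span {x}"] by (simp add: vec.subspace_span split: if_splits)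
  ultimately show ?thesis using span_Un_span1[of U x] by simp
qed

lemma nullity_mono:
  assumes "q_matroid \<rho>" "vec.subspace U" "vec.subspace V" "U \<subseteq> V"
  shows "\<rho> V + vec.dim U \<le> \<rho> U + vec.dim V"
  using assms(2-4)
proof (induction "vec.dim V - vec.dim U" arbitrary: U rule: less_induct)
  case less
  show ?case
  proof (cases "U = V")
    case True then show ?thesis by simp
  next
    case False
    then obtain x where x: "x \<in> V" "x \<notin> U" using less.prems by blast
    define U' where "U' = vec.span (insert x U)"
    have sU': "vec.subspace U'" unfolding U'_def by (rule vec.subspace_span)
    have U'V: "U' \<subseteq> V" unfolding U'_def using less.prems x
      by (simp add: vec.span_minimal)
    have dU': "vec.dim U' = vec.dim U + 1"
    proof -
      have "vec.span U = U" using less.prems(1) by simp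
      then have "x \<notin> vec.span U" using x(2) by metis
      then show ?thesis unfolding U'_def by (simp add: vec.dim_insert)
    qed
    have "vec.dim U' \<le> vec.dim V" using U'V vec.dim_subset by blast
    then have "vec.dim V - vec.dim U' < vec.dim V - vec.dim U" using dU' by simp
    from less.hyps[OF this sU' less.prems(2) U'V]
    have "\<rho> V + vec.dim U' \<le> \<rho> U' + vec.dim V" .
    moreover have "\<rho> U' \<le> \<rho> U + 1" unfolding U'_def using step[OF assms(1) less.prems(1)] .
    ultimately show ?thesis using dU' by simp
  qed
qed

lemma int_closed:
  assumes "q_matroid \<rho>" "vec.subspace V" "vec.subspace A" "vec.subspace B" "A \<subseteq> V" "B \<subseteq> V"
    "\<rho> A + vec.dim V = \<rho> V + vec.dim A" "\<rho> B + vec.dim V = \<rho> V + vec.dim B"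
  shows "\<rho> (A \<inter> B) + vec.dim V = \<rho> V + vec.dim (A \<inter> B)"
proof -
  have s1: "\<rho> (vec.span (A \<union> B)) + \<rho> (A \<inter> B) \<le> \<rho> A + \<rho> B"
    using qm_sub[OF assms(1,3,4)] .
  have d: "vec.dim (vec.span (A \<union> B)) + vec.dim (A \<inter> B) = vec.dim A + vec.dim B"
    using dim_sum[OF assms(3,4)] .
  have sp: "vec.span (A \<union> B) \<subseteq> V" using assms by (simp add: vec.span_minimal)
  have m1: "\<rho> V + vec.dim (vec.span (A \<union> B)) \<le> \<rho> (vec.span (A \<union> B)) + vec.dim V"
    using nullity_mono[OF assms(1) vec.subspace_span assms(2) sp] .
  have m2: "\<rho> V + vec.dim (A \<inter> B) \<le> \<rho> (A \<inter> B) + vec.dim V"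
    using nullity_mono[OF assms(1) vec.subspace_inter[OF assms(3,4)] assms(2)] assms(5) by blast
  show ?thesis using s1 d m1 m2 assms(7,8) by linarith
qed



definition bad :: "((('a::{finite,field})^'n) set \<Rightarrow> nat) \<Rightarrow> ('a^'n) set \<Rightarrow> ('a^'n) set set" where
  "bad \<rho> V = {H. vec.subspace H \<and> H \<subseteq> V \<and> vec.dim H + 1 = vec.dim V \<and> \<rho> H < \<rho> V}"

lemma dim_insert_sub:
  assumes "vec.subspace H" "x \<notin> H"
  shows "vec.dim (vec.span (insert x H)) = vec.dim H + 1"
proof -
  have "vec.span H = H" using assms(1) by simp
  then have "x \<notin> vec.span H" using assms(2) by metis
  then show ?thesis by (simp add: vec.dim_insert)
qed

lemma cyc_eq:
  assumes "q_matroid \<rho>" "vec.subspace V"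
  shows "cyc \<rho> V = V \<inter> \<Inter>(bad \<rho> V)"
proof
  show "cyc \<rho> V \<subseteq> V \<inter> \<Inter>(bad \<rho> V)"
  proof
    fix x assume xc: "x \<in> cyc \<rho> V"
    then have xV: "x \<in> V" unfolding cyc_def by blast
    have "x \<in> H" if H: "H \<in> bad \<rho> V" for H
    proof (rule ccontr)
      assume xH: "x \<notin> H"
      from H have sH: "vec.subspace H" and HV: "H \<subseteq> V" and dH: "vec.dim H + 1 = vec.dim V"
        and rH: "\<rho> H < \<rho> V" unfolding bad_def by auto
      have sub: "vec.span (insert x H) \<subseteq> V" using xV HV assms(2) by (simp add: vec.span_minimal)
      have "vec.dim (vec.span (insert x H)) = vec.dim V" using dim_insert_sub[OF sH xH] dH by simp
      then have "vec.span (insert x H) = V"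
        using vec.subspace_dim_equal[OF vec.subspace_span assms(2) sub] by simp
      then have "vec.span (H \<union> vec.span {x}) = V" using span_Un_span1 by metis
      then have "\<rho> H = \<rho> V" using xc sH HV unfolding cyc_def by blast
      then show False using rH by simp
    qed
    then show "x \<in> V \<inter> \<Inter>(bad \<rho> V)" using xV by blast
  qed
next
  show "V \<inter> \<Inter>(bad \<rho> V) \<subseteq> cyc \<rho> V"
  proof
    fix x assume x: "x \<in> V \<inter> \<Inter>(bad \<rho> V)"
    have "\<rho> W = \<rho> V" if W: "vec.subspace W" "W \<subseteq> V" "vec.span (W \<union> vec.span {x}) = V" for W
    proof (cases "W = V")
      case True then show ?thesis by simp
    next
      case False
      have ins: "vec.span (insert x W) = V" using W(3) span_Un_span1 by metis
      have xW: "x \<notin> W"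
      proof
        assume "x \<in> W"
        then have "insert x W = W" by blast
        then have "vec.span (insert x W) = W" using W(1) by simp
        then show False using ins False by simp
      qed
      have dW: "vec.dim W + 1 = vec.dim V" using dim_insert_sub[OF W(1) xW] ins by simp
      have "\<not> \<rho> W < \<rho> V"
      proof
        assume "\<rho> W < \<rho> V"
        then have "W \<in> bad \<rho> V" using W dW unfolding bad_def by blast
        then show False using x xW by blast
      qed
      moreover have "\<rho> W \<le> \<rho> V" using qm_mono[OF assms(1) W(1) assms(2) W(2)] .
      ultimately show ?thesis by simp
    qed
    then show "x \<in> cyc \<rho> V" using x unfolding cyc_def by blast
  qed
qed

lemma bad_null:
  assumes "q_matroid \<rho>" "vec.subspace V" "H \<in> bad \<rho> V"
  shows "\<rho> H + vec.dim V = \<rho> V + vec.dim H"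
proof -
  from assms(3) have sH: "vec.subspace H" and HV: "H \<subseteq> V" and dH: "vec.dim H + 1 = vec.dim V"
    and rH: "\<rho> H < \<rho> V" unfolding bad_def by auto
  have "\<rho> V + vec.dim H \<le> \<rho> H + vec.dim V" using nullity_mono[OF assms(1) sH assms(2) HV] .
  then show ?thesis using dH rH by linarith
qed

lemma cyc_null:
  assumes "q_matroid \<rho>" "vec.subspace V"
  shows "vec.subspace (cyc \<rho> V) \<and> \<rho> (cyc \<rho> V) + vec.dim V = \<rho> V + vec.dim (cyc \<rho> V)"
proof -
  have fin: "finite (bad \<rho> V)" by simp
  have "\<And>T. T \<subseteq> bad \<rho> V \<Longrightarrow> vec.subspace (V \<inter> \<Inter>T) \<and>
      \<rho> (V \<inter> \<Inter>T) + vec.dim V = \<rho> V + vec.dim (V \<inter> \<Inter>T)"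
  proof -
    fix T assume Tb: "T \<subseteq> bad \<rho> V"
    have "finite T" using Tb fin finite_subset by blast
    from this Tb show "vec.subspace (V \<inter> \<Inter>T) \<and>
      \<rho> (V \<inter> \<Inter>T) + vec.dim V = \<rho> V + vec.dim (V \<inter> \<Inter>T)"
    proof (induction T rule: finite_induct)
      case empty then show ?case using assms by simp
    next
      case (insert H T)
      then have IH: "vec.subspace (V \<inter> \<Inter>T)" "\<rho> (V \<inter> \<Inter>T) + vec.dim V = \<rho> V + vec.dim (V \<inter> \<Inter>T)"
        by auto
      have Hb: "H \<in> bad \<rho> V" using insert by blast
      then have sH: "vec.subspace H" and HV: "H \<subseteq> V" unfolding bad_def by auto
      have eq: "V \<inter> \<Inter>(insert H T) = (V \<inter> \<Inter>T) \<inter> H" by blast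
      have "\<rho> ((V \<inter> \<Inter>T) \<inter> H) + vec.dim V = \<rho> V + vec.dim ((V \<inter> \<Inter>T) \<inter> H)"
        using int_closed[OF assms(1,2) IH(1) sH _ HV IH(2) bad_null[OF assms Hb]] by blast
      moreover have "vec.subspace ((V \<inter> \<Inter>T) \<inter> H)" using vec.subspace_inter[OF IH(1) sH] .
      ultimately show ?case using eq by simp
    qed
  qed
  from this[OF order_refl] show ?thesis using cyc_eq[OF assms] by simp
qed

lemma int_aux: "(rC::nat) + dV = rV + dC \<Longrightarrow> int dV - int rV = int dC - int rC" by linarith

lemma arith_aux: "(dV::nat) + 0 = dC + dW \<Longrightarrow> rV + 0 \<le> rC + rW \<Longrightarrow> rW \<le> dW \<Longrightarrow>
  rC + dV = rV + dC \<Longrightarrow> rV = rC + dW \<and> dW = rW" by linarith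

theorem proposition3p10:
  fixes \<rho> :: "(('a::{finite,field})^'n) set \<Rightarrow> nat" and V :: "('a^'n) set"
  assumes "q_matroid \<rho>" and "vec.subspace V"
  shows "int (vec.dim V) - int (\<rho> V) = int (vec.dim (cyc \<rho> V)) - int (\<rho> (cyc \<rho> V)) \<and>
    (\<forall>W. vec.subspace W \<and> cyc \<rho> V \<inter> W = {0} \<and> vec.span (cyc \<rho> V \<union> W) = V \<longrightarrow>
           \<rho> V = \<rho> (cyc \<rho> V) + vec.dim W \<and> vec.dim W = \<rho> W \<and> q_independent \<rho> W)"
proof -
  have C: "vec.subspace (cyc \<rho> V)" "\<rho> (cyc \<rho> V) + vec.dim V = \<rho> V + vec.dim (cyc \<rho> V)"
    using cyc_null[OF assms] by (rule conjunct1, rule conjunct2)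
  have a: "int (vec.dim V) - int (\<rho> V) = int (vec.dim (cyc \<rho> V)) - int (\<rho> (cyc \<rho> V))"
    using int_aux[OF C(2)] .
  have b: "\<rho> V = \<rho> (cyc \<rho> V) + vec.dim W \<and> vec.dim W = \<rho> W \<and> q_independent \<rho> W"
    if W: "vec.subspace W" "cyc \<rho> V \<inter> W = {0}" "vec.span (cyc \<rho> V \<union> W) = V" for W
  proof -
    have d: "vec.dim V + vec.dim ({0}::('a^'n) set) = vec.dim (cyc \<rho> V) + vec.dim W"
      using dim_sum[OF C(1) W(1)] unfolding W(2) W(3) .
    have d0: "vec.dim ({0}::('a^'n) set) = 0" by simp
    have s: "\<rho> V + \<rho> {0} \<le> \<rho> (cyc \<rho> V) + \<rho> W"
      using qm_sub[OF assms(1) C(1) W(1)] unfolding W(2) W(3) .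
    have z: "\<rho> {0} = 0" using qm_zero[OF assms(1)] .
    have l: "\<rho> W \<le> vec.dim W" using qm_le_dim[OF assms(1) W(1)] .
    have 12: "\<rho> V = \<rho> (cyc \<rho> V) + vec.dim W \<and> vec.dim W = \<rho> W"
      using arith_aux[OF d[unfolded d0] s[unfolded z] l C(2)] .
    have e1: "\<rho> V = \<rho> (cyc \<rho> V) + vec.dim W" using 12 by (rule conjunct1)
    have e2: "vec.dim W = \<rho> W" using 12 by (rule conjunct2)
    have e3: "q_independent \<rho> W" unfolding q_independent_def using e2 by (rule sym)
    show ?thesis using e1 e2 e3 by (intro conjI)
  qed
  show ?thesis
  proof (intro conjI allI impI)
    show "int (vec.dim V) - int (\<rho> V) = int (vec.dim (cyc \<rho> V)) - int (\<rho> (cyc \<rho> V))" by (rule a)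
  next
    fix W assume H: "vec.subspace W \<and> cyc \<rho> V \<inter> W = {0} \<and> vec.span (cyc \<rho> V \<union> W) = V"
    have bb: "\<rho> V = \<rho> (cyc \<rho> V) + vec.dim W \<and> vec.dim W = \<rho> W \<and> q_independent \<rho> W"
      using b[OF H[THEN conjunct1] H[THEN conjunct2, THEN conjunct1] H[THEN conjunct2, THEN conjunct2]] .
    show "\<rho> V = \<rho> (cyc \<rho> V) + vec.dim W" using bb by (rule conjunct1)
    show "vec.dim W = \<rho> W" using bb by (elim conjE)
    show "q_independent \<rho> W" using bb by (elim conjE)
  qed
qed

end
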